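(* Let $R=k[x_1,\dots,x_n]$ be graded by a monoid $P$, let $e_1,\dots,e_m$ be variables of $R$ with $\deg(e_i)=\underline e_i\in P$, let $Q^1,\dots,Q^m$ and $J^1,\dots,J^m$ be $P$-homogeneous ideals with $Q^i\subseteq J^i$, and let $s(t)=\sum_{D\in P}S_Dt^D$ be a power series. Suppose: (1) $HS(J^i,t)=s(t)$ for all $i$; (2) for each $i$, $e_i$ is a nonzerodivisor in $R/Q^i$; (3) all the $Q^i$ have a common Hilbert function; (4) for every $D\in P$ there exist an index $j$ and natural numbers $a_1,\dots,a_m$ such that $\dim_k Q^j_{D+\sum_ia_i\underline e_i}=S_{D+\sum_ia_i\underline e_i}$. Then $Q^i=J^i$ for all $i$.
   Context: $R$ is graded by a monoid $P$ such that every monomial is $P$-homogeneous, the $P$-grading refines the standard grading, and each graded piece is finite dimensional. For a $P$-homogeneous ideal $I$, $I_D$ is its degree-$D$ piece and $HS(I,t)=\sum_{D\in P}\dim_k(I_D)\,t^D$; the Hilbert function of $I$ is $D\mapsto\dim_k I_D$. *)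

theory Defs
  imports Main HOL.Vector_Spaces "HOL-Library.Poly_Mapping"
begin

text \<open>Polynomial ring R = k[x_v : v in 'v] with 'v a finite type of variables:
  a polynomial is a finitely supported map from monomials (exponent vectors
  'v =>0 nat) to coefficients in the field 'k.\<close>

type_synonym ('v, 'k) mpoly = "('v \<Rightarrow>\<^sub>0 nat) \<Rightarrow>\<^sub>0 'k"

definition Var :: "'v \<Rightarrow> ('v, 'k::comm_ring_1) mpoly" where
  "Var v = Poly_Mapping.single (Poly_Mapping.single v 1) 1"

definition kscale :: "'k::field \<Rightarrow> ('v, 'k) mpoly \<Rightarrow> ('v, 'k) mpoly" where
  "kscale c f = Poly_Mapping.map (\<lambda>x. c * x) f"

definition kdim :: "('v, 'k::field) mpoly set \<Rightarrow> nat" where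
  "kdim V = vector_space.dim kscale V"

definition tdeg :: "('v \<Rightarrow>\<^sub>0 nat) \<Rightarrow> nat" where
  "tdeg m = sum (Poly_Mapping.lookup m) (Poly_Mapping.keys m)"

text \<open>A grading of R by the commutative monoid 'p: every monomial m is homogeneous
  of degree deg m, degrees add under multiplication, the P-grading refines the
  standard grading, and each graded piece is finite dimensional
  (finitely many monomials of each degree).\<close>
definition monoid_grading :: "(('v \<Rightarrow>\<^sub>0 nat) \<Rightarrow> 'p::comm_monoid_add) \<Rightarrow> bool" where
  "monoid_grading deg \<longleftrightarrow>
     deg 0 = 0 \<and>
     (\<forall>m1 m2. deg (m1 + m2) = deg m1 + deg m2) \<and>
     (\<forall>m1 m2. deg m1 = deg m2 \<longrightarrow> tdeg m1 = tdeg m2) \<and>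
     (\<forall>D. finite {m. deg m = D})"

definition is_ideal :: "'a::comm_ring_1 set \<Rightarrow> bool" where
  "is_ideal I \<longleftrightarrow> 0 \<in> I \<and> (\<forall>f\<in>I. \<forall>g\<in>I. f + g \<in> I) \<and> (\<forall>r. \<forall>f\<in>I. r * f \<in> I)"

definition hcomp :: "(('v \<Rightarrow>\<^sub>0 nat) \<Rightarrow> 'p) \<Rightarrow> 'p \<Rightarrow> ('v, 'k::zero) mpoly \<Rightarrow> ('v, 'k) mpoly" where
  "hcomp deg D f = Poly_Mapping.Abs_poly_mapping
     (\<lambda>m. if deg m = D then Poly_Mapping.lookup f m else 0)"

definition homogeneous_ideal ::
  "(('v \<Rightarrow>\<^sub>0 nat) \<Rightarrow> 'p) \<Rightarrow> ('v, 'k::comm_ring_1) mpoly set \<Rightarrow> bool" where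
  "homogeneous_ideal deg I \<longleftrightarrow> is_ideal I \<and> (\<forall>f\<in>I. \<forall>D. hcomp deg D f \<in> I)"

definition graded_piece ::
  "(('v \<Rightarrow>\<^sub>0 nat) \<Rightarrow> 'p) \<Rightarrow> ('v, 'k::zero) mpoly set \<Rightarrow> 'p \<Rightarrow> ('v, 'k) mpoly set" where
  "graded_piece deg I D = {f \<in> I. \<forall>m \<in> Poly_Mapping.keys f. deg m = D}"

definition hilbert_fun ::
  "(('v \<Rightarrow>\<^sub>0 nat) \<Rightarrow> 'p) \<Rightarrow> ('v, 'k::field) mpoly set \<Rightarrow> 'p \<Rightarrow> nat" where
  "hilbert_fun deg I D = kdim (graded_piece deg I D)"

end

theory Submission
  imports Defs
begin


context vector_space
begin

lemma indep_Un_span_Int: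
  assumes "finite Y" "independent (X \<union> Y)" "X \<inter> Y = {}"
  shows "span X \<inter> span Y \<subseteq> {0}"
  using assms
proof (induction Y rule: finite_induct)
  case empty
  then show ?case by auto
next
  case (insert y Y)
  have "independent (X \<union> Y)"
    using insert.prems(1) independent_mono[of "X \<union> insert y Y" "X \<union> Y"] by auto
  then have IH: "span X \<inter> span Y \<subseteq> {0}"
    using insert by auto
  show ?case
  proof
    fix z assume z: "z \<in> span X \<inter> span (insert y Y)"
    then obtain k where k: "z - k *s y \<in> span Y" using span_insert by blast
    show "z \<in> {0}"
    proof (cases "k = 0")
      case True
      then show ?thesis using IH z k by auto
    next
      case False
      have "y = (inverse k) *s (z - (z - k *s y))"
        using False by (simp add: scale_right_diff_distrib)
      moreover have "z - (z - k *s y) \<in> span (X \<union> Y)"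
        using z k by (meson IntD1 span_diff span_mono sup_ge1 sup_ge2 subsetD)
      ultimately have "y \<in> span (X \<union> Y)" by (metis span_scale)
      moreover have "y \<notin> X \<union> Y" using insert by auto
      moreover have "independent (insert y (X \<union> Y))" using insert.prems(1) by simp
      ultimately show ?thesis using independent_insert by auto
    qed
  qed
qed

lemma indep_Un:
  assumes "finite Y" "independent X" "independent Y" "span X \<inter> span Y \<subseteq> {0}"
  shows "independent (X \<union> Y)"
  using assms
proof (induction Y rule: finite_induct)
  case empty
  then show ?case by auto
next
  case (insert y Y)
  have yY: "y \<notin> span Y" using insert independent_insert by auto
  have iY: "independent Y" using insert independent_mono by blast
  have "span X \<inter> span Y \<subseteq> {0}" using insert(6) span_mono[of Y "insert y Y"] by auto
  then have IH: "independent (X \<union> Y)" using insert iY by auto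
  have "y \<notin> span (X \<union> Y)"
  proof
    assume "y \<in> span (X \<union> Y)"
    then obtain x z where xz: "y = x + z" "x \<in> span X" "z \<in> span Y" using span_Un by blast
    have "x = y - z" using xz by simp
    moreover have "y - z \<in> span (insert y Y)"
      using xz by (meson span_diff span_base insertI1 span_mono subset_insertI subsetD)
    ultimately have "x \<in> span X \<inter> span (insert y Y)" using xz by auto
    then have "x = 0" using insert(6) by auto
    then show False using xz yY by simp
  qed
  then show ?case using IH independent_insertI by simp
qed

lemma card_le_dim_indep:
  assumes "independent X" "X \<subseteq> V" "V \<subseteq> span W" "finite W"
  shows "finite X \<and> card X \<le> dim V"
proof -
  obtain B where B: "X \<subseteq> B" "B \<subseteq> V" "independent B" "V \<subseteq> span B"
    using maximal_independent_subset_extend[OF assms(2,1)] by blast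
  have fB: "finite B" using independent_span_bound[OF assms(4) B(3)] B(2) assms(3) by auto
  have "card B = dim V" using basis_card_eq_dim B by auto
  then show ?thesis using fB B(1) card_mono finite_subset by metis
qed

lemma key_ineq:
  assumes sQ: "subspace QD" and sJ: "subspace JD" and QJ: "QD \<subseteq> JD"
    and sQ': "subspace QD'" and QJ': "QD' \<subseteq> JD'"
    and W: "JD \<subseteq> span W" "finite W" and W': "JD' \<subseteq> span W'" "finite W'"
    and add: "\<And>x y. \<phi> (x + y) = \<phi> x + \<phi> y"
    and scl: "\<And>c x. \<phi> (c *s x) = c *s \<phi> x"
    and img: "\<phi> ` JD \<subseteq> JD'"
    and bck: "\<And>x. x \<in> JD \<Longrightarrow> \<phi> x \<in> QD' \<Longrightarrow> x \<in> QD"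
  shows "dim JD + dim QD' \<le> dim QD + dim JD'"
proof -
  interpret L: linear scale scale \<phi> by (simp add: linear_iff vector_space_axioms add scl)
  obtain B0 where B0: "B0 \<subseteq> QD" "independent B0" "QD \<subseteq> span B0" "card B0 = dim QD"
    using basis_exists by blast
  obtain B where B: "B0 \<subseteq> B" "B \<subseteq> JD" "independent B" "JD \<subseteq> span B"
    using maximal_independent_subset_extend[of B0 JD] B0 QJ by blast
  have fB: "finite B" using independent_span_bound[OF W(2) B(3)] B(2) W(1) by auto
  have cB: "card B = dim JD" using basis_card_eq_dim B by auto
  define C where "C = B - B0"
  have fC: "finite C" "finite B0" using fB B(1) C_def finite_subset by auto
  have cC: "card C = dim JD - dim QD" using C_def B0 cB fB B(1) card_Diff_subset fC by metis
  have sB0: "span B0 = QD" using B0 sQ span_minimal by blast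
  have CI: "span C \<inter> QD \<subseteq> {0}"
    using indep_Un_span_Int[of B0 C] fC B(3) B(1) sB0 unfolding C_def
    by (metis Diff_disjoint Int_commute Un_Diff_cancel2 sup.absorb_iff1 inf_commute)
  have CJ: "span C \<subseteq> JD" using C_def B(2) sJ span_minimal by blast
  obtain B1 where B1: "B1 \<subseteq> QD'" "independent B1" "QD' \<subseteq> span B1" "card B1 = dim QD'"
    using basis_exists by blast
  have fB1: "finite B1" using independent_span_bound[OF W'(2) B1(2)] B1(1) QJ' W'(1) by auto
  have sB1: "span B1 = QD'" using B1 sQ' span_minimal by blast
  have injS: "inj_on \<phi> (span C)"
  proof (rule inj_onI)
    fix x y assume xy: "x \<in> span C" "y \<in> span C" "\<phi> x = \<phi> y"
    have "\<phi> (x - y) = 0" using xy L.diff by simp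
    then have "\<phi> (x - y) \<in> QD'" using sQ' subspace_0 by auto
    moreover have "x - y \<in> span C" using xy span_diff by auto
    ultimately have "x - y \<in> QD" using bck CJ by auto
    then have "x - y = 0" using CI \<open>x - y \<in> span C\<close> by auto
    then show "x = y" by simp
  qed
  have injC: "inj_on \<phi> C" using injS span_superset inj_on_subset by blast
  have iX: "independent (\<phi> ` C)"
    using L.independent_injective_image[OF _ injS] B(3) C_def independent_mono by blast
  have XI: "span (\<phi> ` C) \<inter> span B1 \<subseteq> {0}"
  proof
    fix v assume v: "v \<in> span (\<phi> ` C) \<inter> span B1"
    then obtain x where x: "x \<in> span C" "v = \<phi> x" using L.span_image by auto
    then have "x \<in> QD" using bck CJ v sB1 by auto
    then have "x = 0" using CI x by auto
    then show "v \<in> {0}" using x L.zero by simp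
  qed
  have iU: "independent (\<phi> ` C \<union> B1)" using indep_Un[OF fB1 iX B1(2) XI] .
  have sub: "\<phi> ` C \<union> B1 \<subseteq> JD'" using img C_def B(2) B1(1) QJ' by auto
  have le: "card (\<phi> ` C \<union> B1) \<le> dim JD'" using card_le_dim_indep[OF iU sub W'] by auto
  have disj: "\<phi> ` C \<inter> B1 = {}"
  proof -
    have "\<phi> ` C \<inter> B1 \<subseteq> {0}" using XI span_superset by blast
    moreover have "0 \<notin> B1" using B1(2) dependent_zero by blast
    ultimately show ?thesis by auto
  qed
  have "card (\<phi> ` C \<union> B1) = card C + card B1"
    using card_Un_disjoint[OF _ fB1 disj] fC card_image[OF injC] by simp
  moreover have "dim QD \<le> dim JD" using B0 cB B(1) fB card_mono by metis
  ultimately show ?thesis using le cC B1 by linarith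
qed

lemma eq_of_dim:
  assumes sQ: "subspace QD" and QJ: "QD \<subseteq> JD"
    and W: "JD \<subseteq> span W" "finite W" and d: "dim JD \<le> dim QD"
  shows "QD = JD"
proof -
  obtain B0 where B0: "B0 \<subseteq> QD" "independent B0" "QD \<subseteq> span B0" "card B0 = dim QD"
    using basis_exists by blast
  obtain B where B: "B0 \<subseteq> B" "B \<subseteq> JD" "independent B" "JD \<subseteq> span B"
    using maximal_independent_subset_extend[of B0 JD] B0 QJ by blast
  have fB: "finite B" using independent_span_bound[OF W(2) B(3)] B(2) W(1) by auto
  have cB: "card B = dim JD" using basis_card_eq_dim B by auto
  have "card B0 = card B" using cB B0 d card_mono[OF fB B(1)] by linarith
  then have "B = B0" using card_subset_eq[OF fB B(1)] by simp
  then have "JD \<subseteq> span B0" using B by simp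
  also have "span B0 \<subseteq> QD" using B0 sQ span_minimal by blast
  finally show ?thesis using QJ by blast
qed

end


lemma kscale_eq: "kscale c f = Poly_Mapping.single 0 c * f"
  unfolding kscale_def using mult_map_scale_conv_mult[of c f] by (simp add: mult_map_scale_conv_mult)

lemma vs: "vector_space (kscale :: 'k::field \<Rightarrow> ('v, 'k) mpoly \<Rightarrow> _)"
  unfolding vector_space_def kscale_eq
  by (simp add: algebra_simps single_add mult_single mult.assoc[symmetric])

lemma md: "module (kscale :: 'k::field \<Rightarrow> ('v, 'k) mpoly \<Rightarrow> _)"
  using vs module_iff_vector_space by blast

lemma keys_kscale: "Poly_Mapping.keys (kscale c f) \<subseteq> Poly_Mapping.keys f"
  unfolding kscale_eq using keys_mult[of "Poly_Mapping.single 0 c" f] by (auto split: if_splits)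

lemma subspace_gp:
  assumes "is_ideal (I :: ('v, 'k::field) mpoly set)"
  shows "module.subspace kscale (graded_piece deg I D)"
proof -
  have "kscale c f \<in> I" if "f \<in> I" for c f
    using assms that unfolding is_ideal_def kscale_eq by blast
  then show ?thesis
    unfolding module.subspace_def[OF md] graded_piece_def
  proof (intro conjI ballI allI)
    show "0 \<in> {f \<in> I. \<forall>m\<in>Poly_Mapping.keys f. deg m = D}" using assms unfolding is_ideal_def by simp
  next
    fix x y assume "x \<in> {f \<in> I. \<forall>m\<in>Poly_Mapping.keys f. deg m = D}" "y \<in> {f \<in> I. \<forall>m\<in>Poly_Mapping.keys f. deg m = D}"
    then show "x + y \<in> {f \<in> I. \<forall>m\<in>Poly_Mapping.keys f. deg m = D}"
      using assms keys_add[of x y] unfolding is_ideal_def by blast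
  next
    fix c x assume "x \<in> {f \<in> I. \<forall>m\<in>Poly_Mapping.keys f. deg m = D}"
    then show "kscale c x \<in> {f \<in> I. \<forall>m\<in>Poly_Mapping.keys f. deg m = D}"
      using \<open>\<And>c f. f \<in> I \<Longrightarrow> kscale c f \<in> I\<close> keys_kscale[of c x] by blast
  qed
qed

lemma poly_expand: "f = (\<Sum>m\<in>Poly_Mapping.keys f. Poly_Mapping.single m (Poly_Mapping.lookup f m))"
  by (rule poly_mapping_eqI) (simp add: lookup_sum lookup_single when_def sum.delta in_keys_iff)

lemma gp_span:
  assumes grading: "monoid_grading deg"
  shows "graded_piece deg (I :: ('v, 'k::field) mpoly set) D
     \<subseteq> module.span kscale ((\<lambda>m. Poly_Mapping.single m 1) ` {m. deg m = D})"
    "finite ((\<lambda>m. Poly_Mapping.single m (1::'k)) ` {m. deg m = D})"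
proof -
  show "finite ((\<lambda>m. Poly_Mapping.single m (1::'k)) ` {m. deg m = D})"
    using grading unfolding monoid_grading_def by auto
  show "graded_piece deg I D \<subseteq> module.span kscale ((\<lambda>m. Poly_Mapping.single m 1) ` {m. deg m = D})"
  proof
    fix f assume f: "f \<in> graded_piece deg I D"
    have "f = (\<Sum>m\<in>Poly_Mapping.keys f. kscale (Poly_Mapping.lookup f m) (Poly_Mapping.single m 1))"
      unfolding kscale_def by (subst poly_expand) simp
    also have "\<dots> \<in> module.span kscale ((\<lambda>m. Poly_Mapping.single m 1) ` {m. deg m = D})"
      using f unfolding graded_piece_def
      by (intro module.span_sum[OF md] module.span_scale[OF md] module.span_base[OF md]) auto
    finally show "f \<in> module.span kscale ((\<lambda>m. Poly_Mapping.single m 1) ` {m. deg m = D})" .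
  qed
qed

lemma keys_Var_mult:
  fixes f :: "('v, 'k::comm_ring_1) mpoly"
  assumes grading: "monoid_grading deg"
    and "\<forall>m\<in>Poly_Mapping.keys f. deg m = D"
  shows "\<forall>m\<in>Poly_Mapping.keys (Var v * f). deg m = D + deg (Poly_Mapping.single v 1)"
proof
  fix m assume "m \<in> Poly_Mapping.keys (Var v * f)"
  then obtain a b where "m = a + b" "a \<in> Poly_Mapping.keys (Var v :: ('v,'k) mpoly)" "b \<in> Poly_Mapping.keys f"
    using keys_mult by blast
  moreover have "Poly_Mapping.keys (Var v :: ('v,'k) mpoly) \<subseteq> {Poly_Mapping.single v 1}"
    unfolding Var_def by simp
  ultimately show "deg m = D + deg (Poly_Mapping.single v 1)"
    using assms unfolding monoid_grading_def by (auto simp: add.commute)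
qed



lemma lookup_hcomp:
  "Poly_Mapping.lookup (hcomp deg D f) = (\<lambda>m. if deg m = D then Poly_Mapping.lookup f m else 0)"
  unfolding hcomp_def
  by (rule lookup_Abs_poly_mapping, rule finite_subset[OF _ finite_lookup[of f]]) auto

lemma keys_hcomp: "m \<in> Poly_Mapping.keys (hcomp deg D f) \<Longrightarrow> deg m = D"
  by (simp add: in_keys_iff lookup_hcomp split: if_splits)

lemma hcomp_sum: "f = (\<Sum>D \<in> deg ` Poly_Mapping.keys f. hcomp deg D f)"
proof (rule poly_mapping_eqI)
  fix m
  show "Poly_Mapping.lookup f m = Poly_Mapping.lookup (\<Sum>D \<in> deg ` Poly_Mapping.keys f. hcomp deg D f) m"
    by (auto simp: lookup_sum lookup_hcomp sum.delta' in_keys_iff)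
qed

lemma ideal_sum:
  assumes "is_ideal I" "finite A" "\<And>x. x \<in> A \<Longrightarrow> g x \<in> I"
  shows "sum g A \<in> I"
  using assms(2,3)
proof (induction A rule: finite_induct)
  case empty then show ?case using assms(1) unfolding is_ideal_def by simp
next
  case (insert x A) then show ?case using assms(1) unfolding is_ideal_def by simp
qed

lemma chain1:
  fixes g :: "'p::comm_monoid_add \<Rightarrow> int"
  assumes "\<And>D. g D \<le> g (D + c)"
  shows "g D \<le> g (D + (\<Sum>_<(k::nat). c))"
proof (induction k)
  case 0 then show ?case by simp
next
  case (Suc k)
  have "g (D + (\<Sum>_<k. c)) \<le> g (D + (\<Sum>_<k. c) + c)" by (rule assms)
  then show ?case using Suc by (simp add: add.assoc)
qed

lemma chain_ineq:
  fixes g :: "'p::comm_monoid_add \<Rightarrow> int" and n :: nat and d :: "nat \<Rightarrow> 'p"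
  shows "(\<And>D k. k < n \<Longrightarrow> g D \<le> g (D + d k)) \<Longrightarrow> g D \<le> g (D + (\<Sum>k<n. \<Sum>_<(a k::nat). d k))"
proof (induction n arbitrary: D)
  case 0 then show ?case by simp
next
  case (Suc n)
  have IH: "g D \<le> g (D + (\<Sum>k<n. \<Sum>_<(a k::nat). d k))" using Suc by simp
  have "g (D + (\<Sum>k<n. \<Sum>_<(a k::nat). d k)) \<le> g (D + (\<Sum>k<n. \<Sum>_<(a k::nat). d k) + (\<Sum>_<a n. d n))"
    by (rule chain1) (rule Suc.prems, simp)
  then show ?case using IH by (simp add: add.assoc)
qed


lemma step_lemma:
  fixes deg :: "('v::finite \<Rightarrow>\<^sub>0 nat) \<Rightarrow> 'p::comm_monoid_add" and Qk Jk :: "('v,'k::field) mpoly set"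
  assumes grading: "monoid_grading deg" and idQ: "is_ideal Qk" and idJ: "is_ideal Jk"
    and sub: "Qk \<subseteq> Jk" and nzd: "\<And>f. Var v * f \<in> Qk \<Longrightarrow> f \<in> Qk"
    and dd: "dd = deg (Poly_Mapping.single v 1)"
  shows "kdim (graded_piece deg Jk D) + kdim (graded_piece deg Qk (D + dd))
       \<le> kdim (graded_piece deg Qk D) + kdim (graded_piece deg Jk (D + dd))"
  unfolding kdim_def
proof (rule vector_space.key_ineq[OF vs, where \<phi> = "\<lambda>f. Var v * f"])
  show "module.subspace kscale (graded_piece deg Qk D)" by (rule subspace_gp[OF idQ])
  show "module.subspace kscale (graded_piece deg Jk D)" by (rule subspace_gp[OF idJ])
  show "module.subspace kscale (graded_piece deg Qk (D + dd))" by (rule subspace_gp[OF idQ])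
  show "graded_piece deg Qk D \<subseteq> graded_piece deg Jk D" using sub unfolding graded_piece_def by blast
  show "graded_piece deg Qk (D + dd) \<subseteq> graded_piece deg Jk (D + dd)" using sub unfolding graded_piece_def by blast
  show "graded_piece deg Jk D \<subseteq> module.span kscale ((\<lambda>m. Poly_Mapping.single m 1) ` {m. deg m = D})"
    "finite ((\<lambda>m. Poly_Mapping.single m (1::'k)) ` {m. deg m = D})"
    by (rule gp_span[OF grading])+
  show "graded_piece deg Jk (D + dd) \<subseteq> module.span kscale ((\<lambda>m. Poly_Mapping.single m 1) ` {m. deg m = D + dd})"
    "finite ((\<lambda>m. Poly_Mapping.single m (1::'k)) ` {m. deg m = D + dd})"
    by (rule gp_span[OF grading])+
  show "\<And>x y. Var v * (x + y) = Var v * x + Var v * y" by (simp add: distrib_left)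
  show "\<And>c x. Var v * kscale c x = kscale c (Var v * x)" unfolding kscale_eq by (rule mult.left_commute)
  show "(\<lambda>f. Var v * f) ` graded_piece deg Jk D \<subseteq> graded_piece deg Jk (D + dd)"
  proof
    fix y assume "y \<in> (\<lambda>f. Var v * f) ` graded_piece deg Jk D"
    then obtain f where f: "f \<in> Jk" "\<forall>m\<in>Poly_Mapping.keys f. deg m = D" "y = Var v * f"
      unfolding graded_piece_def by blast
    have "y \<in> Jk" using f idJ unfolding is_ideal_def by blast
    moreover have "\<forall>m\<in>Poly_Mapping.keys y. deg m = D + dd"
      using keys_Var_mult[OF grading f(2), of v] f(3) dd by simp
    ultimately show "y \<in> graded_piece deg Jk (D + dd)" unfolding graded_piece_def by blast
  qed
  show "x \<in> graded_piece deg Qk D"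
    if "x \<in> graded_piece deg Jk D" "Var v * x \<in> graded_piece deg Qk (D + dd)" for x
  proof -
    have "x \<in> Qk" using that nzd unfolding graded_piece_def by blast
    then show ?thesis using that unfolding graded_piece_def by blast
  qed
qed
theorem mainTheorem15:
  fixes deg :: "('v::finite \<Rightarrow>\<^sub>0 nat) \<Rightarrow> 'p::comm_monoid_add"
    and m :: nat
    and e :: "nat \<Rightarrow> 'v"
    and Q J :: "nat \<Rightarrow> ('v, 'k::field) mpoly set"
    and S :: "'p \<Rightarrow> nat"
  assumes grading: "monoid_grading deg"
    and homQ: "\<And>i. i < m \<Longrightarrow> homogeneous_ideal deg (Q i)"
    and homJ: "\<And>i. i < m \<Longrightarrow> homogeneous_ideal deg (J i)"
    and sub: "\<And>i. i < m \<Longrightarrow> Q i \<subseteq> J i"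
    and HS: "\<And>i D. i < m \<Longrightarrow> hilbert_fun deg (J i) D = S D"
    and nzd: "\<And>i f. i < m \<Longrightarrow> Var (e i) * f \<in> Q i \<Longrightarrow> f \<in> Q i"
    and common: "\<And>i j D. i < m \<Longrightarrow> j < m \<Longrightarrow> hilbert_fun deg (Q i) D = hilbert_fun deg (Q j) D"
    and cond4: "\<And>D. \<exists>j < m. \<exists>a :: nat \<Rightarrow> nat.
        hilbert_fun deg (Q j) (D + (\<Sum>i<m. \<Sum>_<a i. deg (Poly_Mapping.single (e i) 1)))
        = S (D + (\<Sum>i<m. \<Sum>_<a i. deg (Poly_Mapping.single (e i) 1)))"
  shows "\<forall>i < m. Q i = J i"
proof (intro allI impI)
  fix i assume i: "i < m"
  then have m0: "0 < m" by simp
  define h where "h D = hilbert_fun deg (Q 0) D" for D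
  define g where "g D = int (S D) - int (h D)" for D
  define d where "d k = deg (Poly_Mapping.single (e k) 1)" for k
  have hi: "\<And>k D. k < m \<Longrightarrow> hilbert_fun deg (Q k) D = h D" unfolding h_def by (rule common[OF _ m0])
  have idQ: "\<And>k. k < m \<Longrightarrow> is_ideal (Q k)" using homQ homogeneous_ideal_def by blast
  have idJ: "\<And>k. k < m \<Longrightarrow> is_ideal (J k)" using homJ homogeneous_ideal_def by blast
  have gpsub: "\<And>k D. k < m \<Longrightarrow> graded_piece deg (Q k) D \<subseteq> graded_piece deg (J k) D"
    using sub unfolding graded_piece_def by blast
  have step: "g D \<le> g (D + d k)" if k: "k < m" for D k
  proof -
    have "kdim (graded_piece deg (J k) D) + kdim (graded_piece deg (Q k) (D + d k))
       \<le> kdim (graded_piece deg (Q k) D) + kdim (graded_piece deg (J k) (D + d k))"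
      using step_lemma[OF grading idQ[OF k] idJ[OF k] sub[OF k] nzd[OF k] d_def[of k]] by simp
    then have "S D + h (D + d k) \<le> h D + S (D + d k)"
      using HS[OF k] hi[OF k] unfolding hilbert_fun_def by simp
    then show ?thesis unfolding g_def by linarith
  qed
  have eqD: "graded_piece deg (Q i) D = graded_piece deg (J i) D" for D
  proof -
    obtain j and a :: "nat \<Rightarrow> nat" where j: "j < m" and ja: "hilbert_fun deg (Q j) (D + (\<Sum>i<m. \<Sum>_<a i. d i)) = S (D + (\<Sum>i<m. \<Sum>_<a i. d i))"
      using cond4[of D] unfolding d_def by blast
    have "g D \<le> g (D + (\<Sum>i<m. \<Sum>_<a i. d i))" by (rule chain_ineq[where g=g and n=m and d=d and a=a and D=D], rule step)
    also have "\<dots> = 0" using ja hi[OF j] unfolding g_def by simp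
    finally have "S D \<le> h D" unfolding g_def by simp
    then have le: "kdim (graded_piece deg (J i) D) \<le> kdim (graded_piece deg (Q i) D)"
      using HS[OF i] hi[OF i] unfolding hilbert_fun_def by simp
    show ?thesis
      using vector_space.eq_of_dim[OF vs subspace_gp[OF idQ[OF i]] gpsub[OF i] gp_span[OF grading] le[unfolded kdim_def]]
      by blast
  qed
  show "Q i = J i"
  proof
    show "Q i \<subseteq> J i" using sub[OF i] .
    show "J i \<subseteq> Q i"
    proof
      fix f assume f: "f \<in> J i"
      have "(\<Sum>D \<in> deg ` Poly_Mapping.keys f. hcomp deg D f) \<in> Q i"
      proof (rule ideal_sum[OF idQ[OF i]])
        show "finite (deg ` Poly_Mapping.keys f)" by simp
        fix D
        have "hcomp deg D f \<in> J i" using homJ[OF i] f unfolding homogeneous_ideal_def by blast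
        moreover have "\<forall>mm\<in>Poly_Mapping.keys (hcomp deg D f). deg mm = D"
          by (auto simp add: in_keys_iff lookup_hcomp split: if_splits)
        ultimately have "hcomp deg D f \<in> graded_piece deg (J i) D" unfolding graded_piece_def by blast
        then show "hcomp deg D f \<in> Q i" using eqD[of D] unfolding graded_piece_def by blast
      qed
      then show "f \<in> Q i" using hcomp_sum[of f deg] by simp
    qed
  qed
qed

end
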